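(* If $p = p(n)$ satisfies $p^2 n \log n \leqslant 16/\mathrm{e}^5$, then $\mathbb{P}\big(\langle G_{n,p}\rangle_{K_4} = K_n\big) \to 0$ as $n \to \infty$.
   Context: $\mathrm{e}$ is Euler's number. The $K_4$-bootstrap process on $K_n$ starting from $G \subset E(K_n)$: $G_0 = G$, $G_{t+1} = G_t \cup \{f \in E(K_n) : f \text{ is the only edge of some copy of } K_4 \text{ in } K_n \text{ not in } G_t\}$; $\langle G\rangle_{K_4} = \bigcup_t G_t$. $G_{n,p}$ is the Erdős–Rényi random graph on $[n]$. *)

theory Defs
  imports Complex_Main
begin

definition Kn_edges :: "nat \<Rightarrow> nat set set" where
  "Kn_edges n = {e. e \<subseteq> {1..n} \<and> card e = 2}"

definition clique_edges :: "nat set \<Rightarrow> nat set set" where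
  "clique_edges S = {e. e \<subseteq> S \<and> card e = 2}"

definition K4_step :: "nat \<Rightarrow> nat set set \<Rightarrow> nat set set" where
  "K4_step n G = G \<union> {f \<in> Kn_edges n. \<exists>S. S \<subseteq> {1..n} \<and> card S = 4 \<and>
                         clique_edges S - G = {f}}"

definition K4_closure :: "nat \<Rightarrow> nat set set \<Rightarrow> nat set set" where
  "K4_closure n G = (\<Union>t. (K4_step n ^^ t) G)"

definition gnp_prob :: "nat \<Rightarrow> real \<Rightarrow> (nat set set \<Rightarrow> bool) \<Rightarrow> real" where
  "gnp_prob n p P = (\<Sum>G\<in>{G. G \<subseteq> Kn_edges n \<and> P G}.
        p ^ card G * (1 - p) ^ (card (Kn_edges n) - card G))"

end

theory Submission
  imports Defs "HOL-Real_Asymp.Real_Asymp"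
begin


lemma finite_clique_edges: "finite S \<Longrightarrow> finite (clique_edges S)"
  unfolding clique_edges_def by (rule finite_subset[of _ "Pow S"]) auto

lemma clique_edges_mono: "S \<subseteq> T \<Longrightarrow> clique_edges S \<subseteq> clique_edges T"
  unfolding clique_edges_def by auto

definition okP :: "nat \<Rightarrow> nat \<Rightarrow> nat set set \<Rightarrow> (nat set \<times> nat set set) \<Rightarrow> bool" where
"okP n L G P \<longleftrightarrow> fst P \<subseteq> {1..n} \<and> 2 \<le> card (fst P) \<and> card (fst P) < L \<and> snd P \<subseteq> G \<and>
      snd P \<subseteq> clique_edges (fst P) \<and> 2 * card (fst P) \<le> card (snd P) + 3 \<and> finite (snd P)"

definition valid :: "nat \<Rightarrow> nat \<Rightarrow> nat set set \<Rightarrow> (nat set \<times> nat set set) set \<Rightarrow> bool" where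
"valid n L G C \<longleftrightarrow> finite C \<and> (\<forall>P\<in>C. okP n L G P) \<and>
  (\<forall>P\<in>C. \<forall>Q\<in>C. P \<noteq> Q \<longrightarrow> snd P \<inter> snd Q = {}) \<and>
  (\<forall>e\<in>G. \<exists>P\<in>C. e \<subseteq> fst P)"

lemma valid_okP: "valid n L G C \<Longrightarrow> P \<in> C \<Longrightarrow> okP n L G P"
  unfolding valid_def by simp

lemma valid_fin: "valid n L G C \<Longrightarrow> finite C"
  unfolding valid_def by simp

lemma valid_dis: "valid n L G C \<Longrightarrow> P \<in> C \<Longrightarrow> Q \<in> C \<Longrightarrow> P \<noteq> Q \<Longrightarrow> snd P \<inter> snd Q = {}"
  unfolding valid_def by simp

lemma valid_cov: "valid n L G C \<Longrightarrow> e \<in> G \<Longrightarrow> \<exists>P\<in>C. e \<subseteq> fst P"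
  unfolding valid_def by simp

lemma validI: "finite C \<Longrightarrow> (\<And>P. P \<in> C \<Longrightarrow> okP n L G P) \<Longrightarrow>
   (\<And>P Q. P \<in> C \<Longrightarrow> Q \<in> C \<Longrightarrow> P \<noteq> Q \<Longrightarrow> snd P \<inter> snd Q = {}) \<Longrightarrow>
   (\<And>e. e \<in> G \<Longrightarrow> \<exists>P\<in>C. e \<subseteq> fst P) \<Longrightarrow> valid n L G C"
  unfolding valid_def by simp

lemma card3_union:
  assumes "finite A" "finite B" "finite C" "x \<in> A \<inter> B" "y \<in> B \<inter> C" "z \<in> A \<inter> C"
    "x \<noteq> y" "y \<noteq> z" "x \<noteq> z"
  shows "card (A \<union> B \<union> C) + 3 \<le> card A + card B + card C"
proof -
  have 1: "card A + card B = card (A \<union> B) + card (A \<inter> B)"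
    using card_Un_Int[OF assms(1,2)] by simp
  have 2: "card (A \<union> B) + card C = card (A \<union> B \<union> C) + card ((A \<union> B) \<inter> C)"
    using card_Un_Int[of "A \<union> B" C] assms by simp
  have 3: "1 \<le> card (A \<inter> B)"
  proof -
    have "A \<inter> B \<noteq> {}" using assms by auto
    then show ?thesis using assms by (simp add: card_gt_0_iff Suc_le_eq)
  qed
  have "{y, z} \<subseteq> (A \<union> B) \<inter> C" using assms by auto
  then have "card {y,z} \<le> card ((A \<union> B) \<inter> C)" using assms by (intro card_mono) auto
  then have 4: "2 \<le> card ((A \<union> B) \<inter> C)" using assms by simp
  show ?thesis using 1 2 3 4 by linarith
qed

lemma merge2:
  assumes v: "valid n L G C" and PQ: "P \<in> C" "Q \<in> C" "P \<noteq> Q" "2 \<le> card (fst P \<inter> fst Q)"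
  defines "R \<equiv> (fst P \<union> fst Q, snd P \<union> snd Q)"
  shows "card (insert R (C - {P,Q})) < card C"
    "fst R \<subseteq> {1..n}" "2 * card (fst R) \<le> card (G \<inter> clique_edges (fst R)) + 3"
    "card (fst R) < 3 * L" "card (fst R) < L \<Longrightarrow> valid n L G (insert R (C - {P,Q}))"
proof -
  have fC: "finite C" using valid_fin[OF v] .
  have iP: "fst P \<subseteq> {1..n} \<and> 2 \<le> card (fst P) \<and> card (fst P) < L \<and> snd P \<subseteq> G \<and>
      snd P \<subseteq> clique_edges (fst P) \<and> 2 * card (fst P) \<le> card (snd P) + 3 \<and> finite (snd P)"
    using valid_okP[OF v PQ(1)] unfolding okP_def by blast
  have iQ: "fst Q \<subseteq> {1..n} \<and> 2 \<le> card (fst Q) \<and> card (fst Q) < L \<and> snd Q \<subseteq> G \<and>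
      snd Q \<subseteq> clique_edges (fst Q) \<and> 2 * card (fst Q) \<le> card (snd Q) + 3 \<and> finite (snd Q)"
    using valid_okP[OF v PQ(2)] unfolding okP_def by blast
  from iP have P1: "fst P \<subseteq> {1..n}" and P2: "2 \<le> card (fst P)" and P3: "card (fst P) < L"
    and P4: "snd P \<subseteq> G" and P5: "snd P \<subseteq> clique_edges (fst P)" and P6: "2 * card (fst P) \<le> card (snd P) + 3"
    and P7: "finite (snd P)" by blast+
  from iQ have Q1: "fst Q \<subseteq> {1..n}" and Q2: "2 \<le> card (fst Q)" and Q3: "card (fst Q) < L"
    and Q4: "snd Q \<subseteq> G" and Q5: "snd Q \<subseteq> clique_edges (fst Q)" and Q6: "2 * card (fst Q) \<le> card (snd Q) + 3"
    and Q7: "finite (snd Q)" by blast+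
  have dis: "snd P \<inter> snd Q = {}" using valid_dis[OF v] PQ by blast
  have fPs: "finite (fst P)" "finite (fst Q)" using finite_subset[OF P1] finite_subset[OF Q1] by simp_all
  show "card (insert R (C - {P,Q})) < card C"
  proof -
    have "card (insert R (C - {P,Q})) \<le> Suc (card (C - {P,Q}))" using fC by (simp add: card_insert_le_m1)
    moreover have "card (C - {P,Q}) = card C - 2" using PQ fC by (simp add: card_Diff_subset)
    moreover have "2 \<le> card C"
    proof -
      have "{P,Q} \<subseteq> C" using PQ by auto
      then have "card {P,Q} \<le> card C" using fC by (intro card_mono) auto
      then show ?thesis using PQ(3) by simp
    qed
    ultimately show ?thesis by linarith
  qed
  show "fst R \<subseteq> {1..n}" using P1 Q1 R_def by simp
  have cu: "card (fst R) + card (fst P \<inter> fst Q) = card (fst P) + card (fst Q)"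
    using card_Un_Int[OF fPs] R_def by simp
  have ce: "card (snd R) = card (snd P) + card (snd Q)"
    using card_Un_disjoint[of "snd P" "snd Q"] P7 Q7 dis R_def by simp
  have "snd R \<subseteq> G \<inter> clique_edges (fst R)"
    using P4 Q4 P5 Q5 clique_edges_mono[of "fst P" "fst R"] clique_edges_mono[of "fst Q" "fst R"] R_def by auto
  moreover have "finite (clique_edges (fst R))" using fPs R_def by (simp add: finite_clique_edges)
  ultimately have "card (snd R) \<le> card (G \<inter> clique_edges (fst R))" by (simp add: card_mono)
  then show "2 * card (fst R) \<le> card (G \<inter> clique_edges (fst R)) + 3"
    using cu ce P6 Q6 PQ(4) by linarith
  show "card (fst R) < 3 * L" using cu P3 Q3 by linarith
  assume small: "card (fst R) < L"
  show "valid n L G (insert R (C - {P,Q}))"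
  proof (rule validI)
    show "finite (insert R (C - {P, Q}))" using fC by simp
  next
    fix P' assume "P' \<in> insert R (C - {P, Q})"
    then consider "P' = R" | "P' \<in> C" by auto
    then show "okP n L G P'"
    proof cases
      case 1
      have "card (fst P \<inter> fst Q) \<le> card (fst Q)" using fPs by (intro card_mono) auto
      then have "2 \<le> card (fst R)" using cu PQ(4) P2 by linarith
      moreover have "snd R \<subseteq> clique_edges (fst R)"
        using P5 Q5 clique_edges_mono[of "fst P" "fst R"] clique_edges_mono[of "fst Q" "fst R"] R_def by auto
      moreover have "fst R \<subseteq> {1..n}" using P1 Q1 R_def by simp
      moreover have "snd R \<subseteq> G" using P4 Q4 R_def by simp
      moreover have "finite (snd R)" using P7 Q7 R_def by simp
      moreover have "2 * card (fst R) \<le> card (snd R) + 3" using P6 Q6 cu ce PQ(4) by linarith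
      ultimately show ?thesis using 1 small unfolding okP_def by blast
    next
      case 2 then show ?thesis using v valid_okP by blast
    qed
  next
    fix P' Q' assume a: "P' \<in> insert R (C - {P, Q})" "Q' \<in> insert R (C - {P, Q})" "P' \<noteq> Q'"
    have d: "\<And>X. X \<in> C - {P,Q} \<Longrightarrow> snd X \<inter> snd R = {}"
    proof -
      fix X assume "X \<in> C - {P,Q}"
      then have "snd X \<inter> snd P = {}" "snd X \<inter> snd Q = {}" using valid_dis[OF v] PQ by auto
      then show "snd X \<inter> snd R = {}" unfolding R_def by auto
    qed
    show "snd P' \<inter> snd Q' = {}"
    proof (cases "P' = R")
      case True then show ?thesis using a d[of Q'] by auto
    next
      case False
      show ?thesis
      proof (cases "Q' = R")
        case True then show ?thesis using a d[of P'] False by auto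
      next
        case False then show ?thesis using a \<open>P' \<noteq> R\<close> valid_dis[OF v] by auto
      qed
    qed
  next
    fix e assume "e \<in> G"
    then obtain X where X: "X \<in> C" "e \<subseteq> fst X" using valid_cov[OF v] by blast
    show "\<exists>P'\<in>insert R (C - {P, Q}). e \<subseteq> fst P'"
    proof (cases "X = P \<or> X = Q")
      case True
      then have "e \<subseteq> fst R" using X(2) R_def by auto
      then show ?thesis by blast
    next
      case False then show ?thesis using X by blast
    qed
  qed
qed

lemma merge3:
  assumes v: "valid n L G C" and PQ: "P \<in> C" "Q \<in> C" "R \<in> C" "P \<noteq> Q" "Q \<noteq> R" "P \<noteq> R"
    and xyz: "x \<in> fst P \<inter> fst Q" "y \<in> fst Q \<inter> fst R" "z \<in> fst P \<inter> fst R" "x \<noteq> y" "y \<noteq> z" "x \<noteq> z"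
  defines "M \<equiv> (fst P \<union> fst Q \<union> fst R, snd P \<union> snd Q \<union> snd R)"
  shows "card (insert M (C - {P,Q,R})) < card C"
    "fst M \<subseteq> {1..n}" "2 * card (fst M) \<le> card (G \<inter> clique_edges (fst M)) + 3"
    "card (fst M) < 3 * L" "card (fst M) < L \<Longrightarrow> valid n L G (insert M (C - {P,Q,R}))"
proof -
  have fC: "finite C" using valid_fin[OF v] .
  from valid_okP[OF v PQ(1)] have P1: "fst P \<subseteq> {1..n}" and P2: "2 \<le> card (fst P)" and P3: "card (fst P) < L"
    and P4: "snd P \<subseteq> G" and P5: "snd P \<subseteq> clique_edges (fst P)" and P6: "2 * card (fst P) \<le> card (snd P) + 3"
    and P7: "finite (snd P)" unfolding okP_def by blast+
  from valid_okP[OF v PQ(2)] have Q1: "fst Q \<subseteq> {1..n}" and Q2: "2 \<le> card (fst Q)" and Q3: "card (fst Q) < L"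
    and Q4: "snd Q \<subseteq> G" and Q5: "snd Q \<subseteq> clique_edges (fst Q)" and Q6: "2 * card (fst Q) \<le> card (snd Q) + 3"
    and Q7: "finite (snd Q)" unfolding okP_def by blast+
  from valid_okP[OF v PQ(3)] have R1: "fst R \<subseteq> {1..n}" and R2: "2 \<le> card (fst R)" and R3: "card (fst R) < L"
    and R4: "snd R \<subseteq> G" and R5: "snd R \<subseteq> clique_edges (fst R)" and R6: "2 * card (fst R) \<le> card (snd R) + 3"
    and R7: "finite (snd R)" unfolding okP_def by blast+
  have dPQ: "snd P \<inter> snd Q = {}" using valid_dis[OF v] PQ by blast
  have dQR: "snd Q \<inter> snd R = {}" using valid_dis[OF v] PQ by blast
  have dPR: "snd P \<inter> snd R = {}" using valid_dis[OF v] PQ by blast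
  have fPs: "finite (fst P)" "finite (fst Q)" "finite (fst R)"
    using finite_subset[OF P1] finite_subset[OF Q1] finite_subset[OF R1] by simp_all
  show "card (insert M (C - {P,Q,R})) < card C"
  proof -
    have "card (insert M (C - {P,Q,R})) \<le> Suc (card (C - {P,Q,R}))" using fC by (simp add: card_insert_le_m1)
    moreover have "card (C - {P,Q,R}) = card C - card {P,Q,R}" using PQ fC by (intro card_Diff_subset) auto
    moreover have "card {P,Q,R} = 3" using PQ by simp
    moreover have "3 \<le> card C"
    proof -
      have "{P,Q,R} \<subseteq> C" using PQ by auto
      then have "card {P,Q,R} \<le> card C" using fC by (intro card_mono) auto
      then show ?thesis using PQ by simp
    qed
    ultimately show ?thesis by linarith
  qed
  show "fst M \<subseteq> {1..n}" using P1 Q1 R1 M_def by simp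
  have cu: "card (fst M) + 3 \<le> card (fst P) + card (fst Q) + card (fst R)"
    using card3_union[OF fPs xyz] M_def by simp
  have ce: "card (snd M) = card (snd P) + card (snd Q) + card (snd R)"
  proof -
    have "card (snd P \<union> snd Q) = card (snd P) + card (snd Q)"
      using card_Un_disjoint[of "snd P" "snd Q"] P7 Q7 dPQ by simp
    moreover have "card (snd P \<union> snd Q \<union> snd R) = card (snd P \<union> snd Q) + card (snd R)"
      using card_Un_disjoint[of "snd P \<union> snd Q" "snd R"] P7 Q7 R7 dPR dQR by auto
    ultimately show ?thesis using M_def by simp
  qed
  have sub: "snd M \<subseteq> clique_edges (fst M)"
    using P5 Q5 R5 clique_edges_mono[of "fst P" "fst M"] clique_edges_mono[of "fst Q" "fst M"]
      clique_edges_mono[of "fst R" "fst M"] M_def by auto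
  have "snd M \<subseteq> G \<inter> clique_edges (fst M)" using sub P4 Q4 R4 M_def by auto
  moreover have "finite (clique_edges (fst M))" using fPs M_def by (simp add: finite_clique_edges)
  ultimately have "card (snd M) \<le> card (G \<inter> clique_edges (fst M))" by (simp add: card_mono)
  then show "2 * card (fst M) \<le> card (G \<inter> clique_edges (fst M)) + 3"
    using cu ce P6 Q6 R6 by linarith
  show "card (fst M) < 3 * L" using cu P3 Q3 R3 by linarith
  assume small: "card (fst M) < L"
  show "valid n L G (insert M (C - {P,Q,R}))"
  proof (rule validI)
    show "finite (insert M (C - {P,Q,R}))" using fC by simp
  next
    fix P' assume "P' \<in> insert M (C - {P,Q,R})"
    then consider "P' = M" | "P' \<in> C" by auto
    then show "okP n L G P'"
    proof cases
      case 1
      have "card (fst P) \<le> card (fst M)" using fPs M_def by (intro card_mono) auto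
      then have "2 \<le> card (fst M)" using P2 by linarith
      moreover have "fst M \<subseteq> {1..n}" using P1 Q1 R1 M_def by simp
      moreover have "snd M \<subseteq> G" using P4 Q4 R4 M_def by simp
      moreover have "finite (snd M)" using P7 Q7 R7 M_def by simp
      moreover have "2 * card (fst M) \<le> card (snd M) + 3" using P6 Q6 R6 cu ce by linarith
      ultimately show ?thesis using 1 small sub unfolding okP_def by blast
    next
      case 2 then show ?thesis using v valid_okP by blast
    qed
  next
    fix P' Q' assume a: "P' \<in> insert M (C - {P,Q,R})" "Q' \<in> insert M (C - {P,Q,R})" "P' \<noteq> Q'"
    have d: "\<And>X. X \<in> C - {P,Q,R} \<Longrightarrow> snd X \<inter> snd M = {}"
    proof -
      fix X assume "X \<in> C - {P,Q,R}"
      then have "snd X \<inter> snd P = {}" "snd X \<inter> snd Q = {}" "snd X \<inter> snd R = {}"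
        using valid_dis[OF v] PQ by auto
      then show "snd X \<inter> snd M = {}" unfolding M_def by auto
    qed
    show "snd P' \<inter> snd Q' = {}"
    proof (cases "P' = M")
      case True then show ?thesis using a d[of Q'] by auto
    next
      case False
      show ?thesis
      proof (cases "Q' = M")
        case True then show ?thesis using a d[of P'] False by auto
      next
        case False then show ?thesis using a \<open>P' \<noteq> M\<close> valid_dis[OF v] by auto
      qed
    qed
  next
    fix e assume "e \<in> G"
    then obtain X where X: "X \<in> C" "e \<subseteq> fst X" using valid_cov[OF v] by blast
    show "\<exists>P'\<in>insert M (C - {P,Q,R}). e \<subseteq> fst P'"
    proof (cases "X = P \<or> X = Q \<or> X = R")
      case True
      then have "e \<subseteq> fst M" using X(2) M_def by auto
      then show ?thesis by blast
    next
      case False then show ?thesis using X by blast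
    qed
  qed
qed

definition final :: "(nat set \<times> nat set set) set \<Rightarrow> bool" where
"final C \<longleftrightarrow> (\<forall>P\<in>C. \<forall>Q\<in>C. P \<noteq> Q \<longrightarrow> card (fst P \<inter> fst Q) < 2) \<and>
  (\<forall>P\<in>C. \<forall>Q\<in>C. \<forall>R\<in>C. \<forall>x y z. P \<noteq> Q \<longrightarrow> Q \<noteq> R \<longrightarrow> P \<noteq> R \<longrightarrow>
        x \<in> fst P \<inter> fst Q \<longrightarrow> y \<in> fst Q \<inter> fst R \<longrightarrow> z \<in> fst P \<inter> fst R \<longrightarrow> x \<noteq> y \<longrightarrow> y \<noteq> z \<longrightarrow> x \<noteq> z \<longrightarrow> False)"

lemma finalD2: "final C \<Longrightarrow> P \<in> C \<Longrightarrow> Q \<in> C \<Longrightarrow> P \<noteq> Q \<Longrightarrow> card (fst P \<inter> fst Q) < 2"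
  unfolding final_def by blast

lemma finalD3: "final C \<Longrightarrow> P \<in> C \<Longrightarrow> Q \<in> C \<Longrightarrow> R \<in> C \<Longrightarrow> P \<noteq> Q \<Longrightarrow> Q \<noteq> R \<Longrightarrow> P \<noteq> R \<Longrightarrow>
        x \<in> fst P \<inter> fst Q \<Longrightarrow> y \<in> fst Q \<inter> fst R \<Longrightarrow> z \<in> fst P \<inter> fst R \<Longrightarrow> x \<noteq> y \<Longrightarrow> y \<noteq> z \<Longrightarrow> x \<noteq> z \<Longrightarrow> False"
  unfolding final_def by blast

lemma same_of_two:
  assumes v: "valid n L G C" and fin: "final C"
    and PQ: "P \<in> C" "Q \<in> C" "a \<in> fst P" "a \<in> fst Q" "b \<in> fst P" "b \<in> fst Q" "a \<noteq> b"
  shows "P = Q"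
proof (rule ccontr)
  note H2 = finalD2[OF fin]
  assume "P \<noteq> Q"
  then have c: "card (fst P \<inter> fst Q) < 2" using H2 PQ by blast
  have "fst P \<subseteq> {1..n}" using valid_okP[OF v PQ(1)] unfolding okP_def by blast
  then have "finite (fst P \<inter> fst Q)" using finite_subset by blast
  moreover have "{a,b} \<subseteq> fst P \<inter> fst Q" using PQ by auto
  ultimately have "card {a,b} \<le> card (fst P \<inter> fst Q)" by (rule card_mono)
  then show False using c PQ(7) by simp
qed

lemma tri_cover:
  assumes v: "valid n L G C" and fin: "final C"
    and c1: "\<exists>P\<in>C. {u,x} \<subseteq> fst P" and c2: "\<exists>P\<in>C. {u,y} \<subseteq> fst P" and c3: "\<exists>P\<in>C. {x,y} \<subseteq> fst P"
    and d: "u \<noteq> x" "u \<noteq> y" "x \<noteq> y"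
  shows "\<exists>P\<in>C. {u,x,y} \<subseteq> fst P"
proof -
  note H3 = finalD3[OF fin]
  obtain P1 where P1: "P1 \<in> C" "{u,x} \<subseteq> fst P1" using c1 by blast
  obtain P2 where P2: "P2 \<in> C" "{u,y} \<subseteq> fst P2" using c2 by blast
  obtain P3 where P3: "P3 \<in> C" "{x,y} \<subseteq> fst P3" using c3 by blast
  show ?thesis
  proof (cases "P1 = P2")
    case True then show ?thesis using P1 P2 by auto
  next
    case n12: False
    show ?thesis
    proof (cases "P1 = P3")
      case True then show ?thesis using P1 P3 by auto
    next
      case n13: False
      show ?thesis
      proof (cases "P2 = P3")
        case True then show ?thesis using P2 P3 by auto
      next
        case n23: False
        have i1: "u \<in> fst P1 \<inter> fst P2" using P1 P2 by auto
        have i2: "y \<in> fst P2 \<inter> fst P3" using P2 P3 by auto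
        have i3: "x \<in> fst P1 \<inter> fst P3" using P1 P3 by auto
        have False
          using H3[OF P1(1) P2(1) P3(1) n12 n23 n13 i1 i2 i3] d by blast
        then show ?thesis ..
      qed
    qed
  qed
qed

lemma closure_cover:
  assumes v: "valid n L G C" and fin: "final C"
  shows "f \<in> (K4_step n ^^ t) G \<Longrightarrow> \<exists>P\<in>C. f \<subseteq> fst P"
proof (induction t arbitrary: f)
  case 0
  then show ?case using valid_cov[OF v] by simp
next
  case (Suc t)
  define H where "H = (K4_step n ^^ t) G"
  have IH: "\<And>g. g \<in> H \<Longrightarrow> \<exists>P\<in>C. g \<subseteq> fst P" using Suc.IH H_def by blast
  have "f \<in> K4_step n H" using Suc.prems H_def by simp
  then consider "f \<in> H" | S where "S \<subseteq> {1..n}" "card S = 4" "clique_edges S - H = {f}"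
    unfolding K4_step_def by blast
  then show ?case
  proof cases
    case 1 then show ?thesis using IH by blast
  next
    case 2
    have fS: "f \<in> clique_edges S" using 2(3) by blast
    then have "f \<subseteq> S" "card f = 2" unfolding clique_edges_def by auto
    then obtain u w where f: "f = {u,w}" "u \<noteq> w" unfolding card_2_iff by blast
    have finS: "finite S"
    proof (rule ccontr)
      assume "infinite S" then have "card S = 0" by simp
      then show False using 2(2) by simp
    qed
    have "card (S - f) = 2" using card_Diff_subset[OF _ \<open>f \<subseteq> S\<close>] \<open>card f = 2\<close> 2(2) finS
      finite_subset[OF \<open>f \<subseteq> S\<close> finS] by simp
    then obtain x y where xy: "S - f = {x,y}" "x \<noteq> y" unfolding card_2_iff by blast
    have dist: "u \<noteq> x" "u \<noteq> y" "w \<noteq> x" "w \<noteq> y" using xy f by auto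
    have inS: "u \<in> S" "w \<in> S" "x \<in> S" "y \<in> S" using xy f \<open>f \<subseteq> S\<close> by auto
    have edge: "\<And>a b. a \<in> S \<Longrightarrow> b \<in> S \<Longrightarrow> a \<noteq> b \<Longrightarrow> {a,b} \<noteq> f \<Longrightarrow> \<exists>P\<in>C. {a,b} \<subseteq> fst P"
    proof -
      fix a b assume ab: "a \<in> S" "b \<in> S" "a \<noteq> b" "{a,b} \<noteq> f"
      have "{a,b} \<in> clique_edges S" unfolding clique_edges_def using ab(1,2,3) by simp
      moreover have "{a,b} \<notin> clique_edges S - H" using 2(3) ab(4) by simp
      ultimately have "{a,b} \<in> H" by simp
      then show "\<exists>P\<in>C. {a,b} \<subseteq> fst P" using IH by blast
    qed
    have neq: "{u,x} \<noteq> f" "{u,y} \<noteq> f" "{w,x} \<noteq> f" "{w,y} \<noteq> f" "{x,y} \<noteq> f"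
      using f dist xy by (auto simp: doubleton_eq_iff)
    obtain A where A: "A \<in> C" "{u,x,y} \<subseteq> fst A"
      using tri_cover[OF v fin edge[OF inS(1,3) dist(1) neq(1)] edge[OF inS(1,4) dist(2) neq(2)]
          edge[OF inS(3,4) xy(2) neq(5)] dist(1,2) xy(2)] by blast
    obtain B where B: "B \<in> C" "{w,x,y} \<subseteq> fst B"
      using tri_cover[OF v fin edge[OF inS(2,3) dist(3) neq(3)] edge[OF inS(2,4) dist(4) neq(4)]
          edge[OF inS(3,4) xy(2) neq(5)] dist(3,4) xy(2)] by blast
    have "x \<in> fst A" "x \<in> fst B" "y \<in> fst A" "y \<in> fst B" using A B by auto
    then have "A = B" using same_of_two[OF v fin A(1) B(1), of x y] xy(2) by blast
    then show ?thesis using A B f by auto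
  qed
qed

lemma finite_Kn_edges: "finite (Kn_edges n)"
  unfolding Kn_edges_def by (rule finite_subset[of _ "Pow {1..n}"]) auto

lemma Kn_edge_pair: "a \<in> {1..n} \<Longrightarrow> b \<in> {1..n} \<Longrightarrow> a \<noteq> b \<Longrightarrow> {a,b} \<in> Kn_edges n"
  unfolding Kn_edges_def by simp

lemma key_lemma:
  assumes G: "G \<subseteq> Kn_edges n" and perc: "K4_closure n G = Kn_edges n" and L: "3 \<le> L" "L \<le> n"
  shows "\<exists>S. S \<subseteq> {1..n} \<and> L \<le> card S \<and> card S < 3 * L \<and> 2 * card S \<le> card (G \<inter> clique_edges S) + 3"
proof (rule ccontr)
  assume nS: "\<not> ?thesis"
  define C0 where "C0 = (\<lambda>e. (e, {e})) ` G"
  have finG: "finite G" using finite_subset[OF G finite_Kn_edges] .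
  have v0: "valid n L G C0"
  proof (rule validI)
    show "finite C0" using finG C0_def by simp
  next
    fix P assume "P \<in> C0"
    then obtain e where e: "e \<in> G" "P = (e, {e})" using C0_def by blast
    then have "e \<subseteq> {1..n}" "card e = 2" using G unfolding Kn_edges_def by auto
    moreover have "e \<in> clique_edges e" using \<open>card e = 2\<close> unfolding clique_edges_def by simp
    ultimately show "okP n L G P" unfolding okP_def using e L by simp
  next
    fix P Q assume "P \<in> C0" "Q \<in> C0" "P \<noteq> Q"
    then show "snd P \<inter> snd Q = {}" using C0_def by auto
  next
    fix e assume "e \<in> G"
    then show "\<exists>P\<in>C0. e \<subseteq> fst P" using C0_def by force
  qed
  obtain C where v: "valid n L G C" and minC: "\<And>C'. valid n L G C' \<Longrightarrow> card C \<le> card C'"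
    using ex_has_least_nat[of "valid n L G" C0 card] v0 by blast
  have fin: "final C"
    unfolding final_def
  proof (intro conjI ballI allI impI)
    fix P Q assume PQ: "P \<in> C" "Q \<in> C" "P \<noteq> Q"
    show "card (fst P \<inter> fst Q) < 2"
    proof (rule ccontr)
      assume "\<not> card (fst P \<inter> fst Q) < 2"
      then have c2: "2 \<le> card (fst P \<inter> fst Q)" by simp
      note m = merge2[OF v PQ c2]
      show False
      proof (cases "card (fst P \<union> fst Q) < L")
        case True
        then show False using m(1) minC[OF m(5)] by simp
      next
        case False
        then show False using m(2,3,4) nS by (metis fst_conv not_le)
      qed
    qed
  next
    fix P Q R x y z assume a: "P \<in> C" "Q \<in> C" "R \<in> C" "P \<noteq> Q" "Q \<noteq> R" "P \<noteq> R"
      "x \<in> fst P \<inter> fst Q" "y \<in> fst Q \<inter> fst R" "z \<in> fst P \<inter> fst R" "x \<noteq> y" "y \<noteq> z" "x \<noteq> z"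
    note m = merge3[OF v a]
    show False
    proof (cases "card (fst P \<union> fst Q \<union> fst R) < L")
      case True
      then show False using m(1) minC[OF m(5)] by simp
    next
      case False
      then show False using m(2,3,4) nS by (metis fst_conv not_le)
    qed
  qed
  have cov: "\<And>f. f \<in> Kn_edges n \<Longrightarrow> \<exists>P\<in>C. f \<subseteq> fst P"
  proof -
    fix f assume "f \<in> Kn_edges n"
    then have "f \<in> K4_closure n G" using perc by simp
    then obtain t where "f \<in> (K4_step n ^^ t) G" unfolding K4_closure_def by blast
    then show "\<exists>P\<in>C. f \<subseteq> fst P" using closure_cover[OF v fin] by blast
  qed
  have n12: "(1::nat) \<in> {1..n}" "(2::nat) \<in> {1..n}" using L by auto
  obtain P0 where P0: "P0 \<in> C" "{1,2} \<subseteq> fst P0" using cov[OF Kn_edge_pair[OF n12]] by auto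
  have "{1..n} \<subseteq> fst P0"
  proof
    fix w assume w: "w \<in> {1..n}"
    show "w \<in> fst P0"
    proof (cases "w = 1 \<or> w = 2")
      case True then show ?thesis using P0 by auto
    next
      case False
      obtain P where P: "P \<in> C" "{w,1,2} \<subseteq> fst P"
        using tri_cover[OF v fin cov[OF Kn_edge_pair[OF w n12(1)]] cov[OF Kn_edge_pair[OF w n12(2)]]
            cov[OF Kn_edge_pair[OF n12]]] False by auto
      have "(1::nat) \<in> fst P" "(1::nat) \<in> fst P0" "(2::nat) \<in> fst P" "(2::nat) \<in> fst P0" using P P0 by auto
      then have "P = P0" using same_of_two[OF v fin P(1) P0(1), of 1 2] by simp
      then show ?thesis using P by auto
    qed
  qed
  then have "fst P0 = {1..n}"
    using valid_okP[OF v P0(1)] unfolding okP_def by blast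
  then have "card {1..n} \<le> card (fst P0)" by simp
  moreover have "card (fst P0) < L" using valid_okP[OF v P0(1)] unfolding okP_def by blast
  ultimately show False using L by simp
qed



lemma gnp_alt:
  "gnp_prob n p P = (\<Sum>G\<in>Pow (Kn_edges n). if P G then p ^ card G * (1 - p) ^ (card (Kn_edges n) - card G) else 0)"
proof -
  have "{G. G \<subseteq> Kn_edges n \<and> P G} = {G \<in> Pow (Kn_edges n). P G}" by auto
  then show ?thesis unfolding gnp_prob_def
    using sum.inter_filter[of "Pow (Kn_edges n)" "\<lambda>G. p ^ card G * (1 - p) ^ (card (Kn_edges n) - card G)" P]
      finite_Kn_edges by simp
qed

lemma union_bound:
  assumes p: "0 \<le> p" "p \<le> 1" and I: "finite I"
    and imp: "\<And>G. G \<subseteq> Kn_edges n \<Longrightarrow> P G \<Longrightarrow> \<exists>i\<in>I. Q i G"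
  shows "gnp_prob n p P \<le> (\<Sum>i\<in>I. gnp_prob n p (Q i))"
proof -
  define w :: "nat set set \<Rightarrow> real" where "w G = p ^ card G * (1 - p) ^ (card (Kn_edges n) - card G)" for G
  have w0: "0 \<le> w G" for G using p unfolding w_def by simp
  have "gnp_prob n p P = (\<Sum>G\<in>Pow (Kn_edges n). if P G then w G else 0)"
    unfolding gnp_alt w_def ..
  also have "\<dots> \<le> (\<Sum>G\<in>Pow (Kn_edges n). \<Sum>i\<in>I. if Q i G then w G else 0)"
  proof (rule sum_mono)
    fix G assume G: "G \<in> Pow (Kn_edges n)"
    show "(if P G then w G else 0) \<le> (\<Sum>i\<in>I. if Q i G then w G else 0)"
    proof (cases "P G")
      case True
      then obtain i where i: "i \<in> I" "Q i G" using imp G by blast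
      have "(if Q i G then w G else 0) \<le> (\<Sum>i\<in>I. if Q i G then w G else 0)"
        using i I w0 by (intro member_le_sum) auto
      then show ?thesis using True i by simp
    next
      case False then show ?thesis using w0 by (simp add: sum_nonneg)
    qed
  qed
  also have "\<dots> = (\<Sum>i\<in>I. \<Sum>G\<in>Pow (Kn_edges n). if Q i G then w G else 0)"
    by (rule sum.swap)
  also have "\<dots> = (\<Sum>i\<in>I. gnp_prob n p (Q i))"
    unfolding gnp_alt w_def ..
  finally show ?thesis .
qed

lemma sum_Pow_binom:
  fixes p :: real
  assumes "finite W"
  shows "(\<Sum>H\<in>Pow W. p ^ card H * (1 - p) ^ (card W - card H)) = 1"
proof -
  have "(\<Prod>x\<in>W. p + (1 - p)) = (\<Sum>X\<in>Pow W. (\<Prod>x\<in>X. p) * (\<Prod>x\<in>W - X. 1 - p))"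
    by (rule prod_add[OF assms])
  also have "\<dots> = (\<Sum>H\<in>Pow W. p ^ card H * (1 - p) ^ (card W - card H))"
  proof (rule sum.cong)
    fix X assume "X \<in> Pow W"
    then have "card (W - X) = card W - card X" using assms by (simp add: card_Diff_subset finite_subset)
    then show "(\<Prod>x\<in>X. p) * (\<Prod>x\<in>W - X. 1 - p) = p ^ card X * (1 - p) ^ (card W - card X)"
      by simp
  qed simp
  finally show ?thesis by simp
qed

lemma gnp_contains:
  assumes E: "E \<subseteq> Kn_edges n"
  shows "gnp_prob n p (\<lambda>G. E \<subseteq> G) = p ^ card E"
proof -
  define U where "U = Kn_edges n"
  have fU: "finite U" using finite_Kn_edges U_def by simp
  have fE: "finite E" using finite_subset[OF E] finite_Kn_edges by simp
  have set: "{G. G \<subseteq> U \<and> E \<subseteq> G} = (\<lambda>H. E \<union> H) ` Pow (U - E)"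
  proof
    show "{G. G \<subseteq> U \<and> E \<subseteq> G} \<subseteq> (\<lambda>H. E \<union> H) ` Pow (U - E)"
    proof
      fix G assume "G \<in> {G. G \<subseteq> U \<and> E \<subseteq> G}"
      then have "G = E \<union> (G - E)" "G - E \<in> Pow (U - E)" by auto
      then show "G \<in> (\<lambda>H. E \<union> H) ` Pow (U - E)" by blast
    qed
    show "(\<lambda>H. E \<union> H) ` Pow (U - E) \<subseteq> {G. G \<subseteq> U \<and> E \<subseteq> G}" using E U_def by auto
  qed
  have inj: "inj_on (\<lambda>H. E \<union> H) (Pow (U - E))"
  proof (rule inj_onI)
    fix H1 H2 assume "H1 \<in> Pow (U - E)" "H2 \<in> Pow (U - E)" "E \<union> H1 = E \<union> H2"
    then show "H1 = H2" by blast
  qed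
  have cU: "card U = card E + card (U - E)"
    using card_Diff_subset[OF fE] E U_def fU by (simp add: card_mono)
  have "gnp_prob n p (\<lambda>G. E \<subseteq> G) = (\<Sum>G\<in>(\<lambda>H. E \<union> H) ` Pow (U - E). p ^ card G * (1 - p) ^ (card U - card G))"
    unfolding gnp_prob_def U_def[symmetric] set ..
  also have "\<dots> = (\<Sum>H\<in>Pow (U - E). p ^ card (E \<union> H) * (1 - p) ^ (card U - card (E \<union> H)))"
    by (rule sum.reindex[OF inj, unfolded comp_def])
  also have "\<dots> = (\<Sum>H\<in>Pow (U - E). p ^ card E * (p ^ card H * (1 - p) ^ (card (U - E) - card H)))"
  proof (rule sum.cong)
    fix H assume H: "H \<in> Pow (U - E)"
    then have fH: "finite H" using fU finite_subset by blast
    have "card (E \<union> H) = card E + card H" using H fE fH by (intro card_Un_disjoint) auto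
    then show "p ^ card (E \<union> H) * (1 - p) ^ (card U - card (E \<union> H)) =
        p ^ card E * (p ^ card H * (1 - p) ^ (card (U - E) - card H))"
      using cU by (simp add: power_add)
  qed simp
  also have "\<dots> = p ^ card E * (\<Sum>H\<in>Pow (U - E). p ^ card H * (1 - p) ^ (card (U - E) - card H))"
    by (simp add: sum_distrib_left)
  also have "\<dots> = p ^ card E" using sum_Pow_binom[of "U - E" p] fU by simp
  finally show ?thesis .
qed

lemma gnp_many_edges:
  assumes p: "0 \<le> p" "p \<le> 1" and K: "K \<subseteq> Kn_edges n"
  shows "gnp_prob n p (\<lambda>G. m \<le> card (G \<inter> K)) \<le> real (card K choose m) * p ^ m"
proof -
  have fK: "finite K" using finite_subset[OF K] finite_Kn_edges by simp
  define I where "I = {E. E \<subseteq> K \<and> card E = m}"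
  have "I \<subseteq> Pow K" unfolding I_def by auto
  then have fI: "finite I" by (rule finite_subset) (simp add: fK)
  have "gnp_prob n p (\<lambda>G. m \<le> card (G \<inter> K)) \<le> (\<Sum>E\<in>I. gnp_prob n p (\<lambda>G. E \<subseteq> G))"
  proof (rule union_bound[OF p fI])
    fix G assume "G \<subseteq> Kn_edges n" "m \<le> card (G \<inter> K)"
    then obtain E where "E \<subseteq> G \<inter> K" "card E = m" by (meson obtain_subset_with_card_n)
    then show "\<exists>E\<in>I. E \<subseteq> G" unfolding I_def by auto
  qed
  also have "\<dots> = (\<Sum>E\<in>I. p ^ m)"
    using gnp_contains K unfolding I_def by (intro sum.cong) auto
  also have "\<dots> = real (card I) * p ^ m" by simp
  also have "card I = card K choose m" unfolding I_def using n_subsets[OF fK] by simp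
  finally show ?thesis .
qed

lemma card_clique_edges: "finite S \<Longrightarrow> card (clique_edges S) = card S choose 2"
  unfolding clique_edges_def by (rule n_subsets)

lemma clique_edges_sub: "S \<subseteq> {1..n} \<Longrightarrow> clique_edges S \<subseteq> Kn_edges n"
  unfolding clique_edges_def Kn_edges_def by auto

lemma perc_bound:
  assumes p: "0 \<le> p" "p \<le> 1" and L: "3 \<le> L" "L \<le> n"
  shows "gnp_prob n p (\<lambda>G. K4_closure n G = Kn_edges n) \<le>
    (\<Sum>v\<in>{L..<3*L}. real (n choose v) * (real ((v choose 2) choose (2*v-3)) * p ^ (2*v-3)))"
proof -
  define SS where "SS = {S. S \<subseteq> {1..n} \<and> L \<le> card S \<and> card S < 3 * L}"
  define f where "f v = real ((v choose 2) choose (2*v-3)) * p ^ (2*v-3)" for v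
  have "SS \<subseteq> Pow {1..n}" unfolding SS_def by auto
  then have fSS: "finite SS" by (rule finite_subset) simp
  have "gnp_prob n p (\<lambda>G. K4_closure n G = Kn_edges n) \<le>
      (\<Sum>S\<in>SS. gnp_prob n p (\<lambda>G. 2 * card S - 3 \<le> card (G \<inter> clique_edges S)))"
  proof (rule union_bound[OF p fSS, where Q = "\<lambda>S G. 2 * card S - 3 \<le> card (G \<inter> clique_edges S)"])
    fix G assume G: "G \<subseteq> Kn_edges n" "K4_closure n G = Kn_edges n"
    obtain S where S: "S \<subseteq> {1..n}" "L \<le> card S" "card S < 3 * L" "2 * card S \<le> card (G \<inter> clique_edges S) + 3"
      using key_lemma[OF G L] by blast
    have "S \<in> SS" unfolding SS_def using S(1,2,3) by simp
    moreover have "2 * card S - 3 \<le> card (G \<inter> clique_edges S)" using S(4) by simp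
    ultimately show "\<exists>S\<in>SS. 2 * card S - 3 \<le> card (G \<inter> clique_edges S)" by blast
  qed
  also have "\<dots> \<le> (\<Sum>S\<in>SS. f (card S))"
  proof (rule sum_mono)
    fix S assume "S \<in> SS"
    then have S: "S \<subseteq> {1..n}" unfolding SS_def by auto
    then have "finite S" by (rule finite_subset) simp
    then show "gnp_prob n p (\<lambda>G. 2 * card S - 3 \<le> card (G \<inter> clique_edges S)) \<le> f (card S)"
      using gnp_many_edges[OF p clique_edges_sub[OF S], of "2 * card S - 3"] card_clique_edges
      unfolding f_def by simp
  qed
  also have "\<dots> = (\<Sum>v\<in>{L..<3*L}. \<Sum>S\<in>{S. S \<in> SS \<and> card S = v}. f (card S))"
  proof -
    have "card ` SS \<subseteq> {L..<3*L}" unfolding SS_def by auto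
    then show ?thesis using sum.group[OF fSS finite_atLeastLessThan, of card L "3*L" "\<lambda>S. f (card S)"] by simp
  qed
  also have "\<dots> = (\<Sum>v\<in>{L..<3*L}. real (n choose v) * f v)"
  proof (rule sum.cong)
    fix v assume v: "v \<in> {L..<3*L}"
    have "{S. S \<in> SS \<and> card S = v} = {S. S \<subseteq> {1..n} \<and> card S = v}" using v unfolding SS_def by auto
    moreover have "card {S. S \<subseteq> {1..n} \<and> card S = v} = n choose v" using n_subsets[of "{1..n}" v] by simp
    moreover have "(\<Sum>S\<in>{S. S \<in> SS \<and> card S = v}. f (card S)) = (\<Sum>S\<in>{S. S \<in> SS \<and> card S = v}. f v)"
      by (rule sum.cong) auto
    ultimately show "(\<Sum>S\<in>{S. S \<in> SS \<and> card S = v}. f (card S)) = real (n choose v) * f v"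
      by (simp add: mult.commute)
  qed simp
  finally show ?thesis unfolding f_def .
qed



lemma fact_lower: "(real k / exp 1) ^ k \<le> fact k"
proof (induction k)
  case 0 then show ?case by simp
next
  case (Suc k)
  show ?case
  proof (cases "k = 0")
    case True then show ?thesis by simp
  next
    case False
    have e: "(1 + 1 / real k) ^ k \<le> exp 1"
      using exp_ge_one_plus_x_over_n_power_n[of k 1] False by simp
    have r: "real (Suc k) / exp 1 = (real k / exp 1) * (1 + 1 / real k)" using False by (simp add: field_simps)
    have r2: "(real (Suc k) / exp 1) ^ k = (real k / exp 1) ^ k * (1 + 1 / real k) ^ k"
      by (simp only: r power_mult_distrib)
    have "(real (Suc k) / exp 1) ^ Suc k = (real (Suc k) / exp 1) * ((real k / exp 1) ^ k * (1 + 1 / real k) ^ k)"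
      by (simp only: power_Suc r2)
    also have "\<dots> \<le> (real (Suc k) / exp 1) * ((real k / exp 1) ^ k * exp 1)"
      by (intro mult_left_mono e) auto
    also have "\<dots> = real (Suc k) * (real k / exp 1) ^ k" by simp
    also have "\<dots> \<le> real (Suc k) * fact k" using Suc.IH by (intro mult_left_mono) auto
    also have "\<dots> = fact (Suc k)" by simp
    finally show ?thesis .
  qed
qed

lemma binom_upper:
  assumes "1 \<le> k"
  shows "real (N choose k) \<le> (exp 1 * real N / real k) ^ k"
proof -
  have "(N choose k) * fact k \<le> N ^ k" by (rule binomial_fact_pow)
  then have "real ((N choose k) * fact k) \<le> real (N ^ k)" by (rule of_nat_mono)
  then have "real (N choose k) * fact k \<le> real N ^ k" by (simp only: of_nat_mult of_nat_fact of_nat_power)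
  then have "real (N choose k) \<le> real N ^ k / fact k" by (simp add: field_simps)
  also have "\<dots> \<le> real N ^ k / (real k / exp 1) ^ k"
    using fact_lower[of k] assms by (intro divide_left_mono) auto
  also have "\<dots> = (real N / (real k / exp 1)) ^ k" by (simp add: power_divide power_mult_distrib)
  also have "real N / (real k / exp 1) = exp 1 * real N / real k" by simp
  finally show ?thesis .
qed

lemma choose2_real: "real (v choose 2) = real v * (real v - 1) / 2"
proof (induction v)
  case 0 then show ?case by simp
next
  case (Suc v)
  have "Suc v choose 2 = v + (v choose 2)" by (simp add: numeral_2_eq_2)
  then have "real (Suc v choose 2) = real v + real v * (real v - 1) / 2" using Suc.IH by simp
  also have "\<dots> = real (Suc v) * (real (Suc v) - 1) / 2" by (simp add: field_simps)
  finally show ?case .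
qed

lemma exp_nat_pow: "exp (real k) = exp 1 ^ k"
  using exp_of_nat_mult[of k 1] by simp

lemma term_bound:
  fixes n v :: nat and p :: real
  assumes v: "3 \<le> v" and l: "0 < ln (real n)" and p: "0 \<le> p" "p \<le> 1"
    and pn: "p^2 * real n * ln (real n) \<le> 16 / exp 5"
  shows "real (n choose v) * (real ((v choose 2) choose (2*v-3)) * p^(2*v-3))
    \<le> exp 8 * real n ^ 2 * ln (real n) ^ 2 * (real v / (exp 2 * ln (real n))) ^ v"
proof -
  define E where "E = exp (1::real)"
  define ll where "ll = ln (real n)"
  define x where "x = real v"
  define nn where "nn = real n"
  obtain k where k: "v = k + 2" using v by (intro that[of "v-2"]) simp
  have E0: "0 < E" unfolding E_def by simp
  have l0: "0 < ll" using l ll_def by simp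
  have x3: "3 \<le> x" using v x_def by simp
  have "n \<noteq> 0" using l by (cases n) auto
  then have nn0: "0 < nn" using nn_def by simp
  have m: "2*v-3 = 2*k+1" using k v by simp
  have rm: "real (2*v-3) = 2*x - 3" using v x_def by (simp add: of_nat_diff)
  define A where "A = E * nn / x"
  define X where "X = x^2 / (E^3 * nn * ll)"
  define Y where "Y = x / (E^2 * ll)"
  have A0: "0 \<le> A" "0 \<le> X" "0 \<le> Y" using E0 nn0 x3 l0 unfolding A_def X_def Y_def by auto
  have s1: "real (n choose v) \<le> A ^ v"
    using binom_upper[of v n] v unfolding A_def E_def nn_def x_def by simp
  have "real ((v choose 2) choose (2*v-3)) \<le> (E * real (v choose 2) / real (2*v-3)) ^ (2*v-3)"
    using binom_upper[of "2*v-3" "v choose 2"] v unfolding E_def by simp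
  also have "E * real (v choose 2) / real (2*v-3) = (E * x / 4) * (1 + 1 / real (2*v-3))"
    using x3 rm unfolding choose2_real by (simp add: field_simps x_def)
  also have "((E * x / 4) * (1 + 1 / real (2*v-3))) ^ (2*v-3) = (E * x / 4) ^ (2*v-3) * (1 + 1 / real (2*v-3)) ^ (2*v-3)"
    by (rule power_mult_distrib)
  also have "\<dots> \<le> (E * x / 4) ^ (2*v-3) * E"
  proof (rule mult_left_mono)
    show "(1 + 1 / real (2*v-3)) ^ (2*v-3) \<le> E"
      using exp_ge_one_plus_x_over_n_power_n[of "2*v-3" 1] v unfolding E_def by simp
    show "0 \<le> (E * x / 4) ^ (2*v-3)" using E0 x3 by simp
  qed
  finally have s2: "real ((v choose 2) choose (2*v-3)) \<le> (E * x / 4) ^ (2*v-3) * E" .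
  have pl: "p^2 \<le> 16 / (E^5 * nn * ll)"
  proof -
    have "exp (5::real) = E^5" unfolding E_def using exp_nat_pow[of 5] by simp
    then have "p^2 * (nn * ll) \<le> 16 / E^5" using pn unfolding nn_def ll_def by (simp add: mult.assoc)
    then show ?thesis using nn0 l0 E0 by (simp add: field_simps)
  qed
  have s3: "(E * x / 4) ^ (2*v-3) * p ^ (2*v-3) \<le> (E * x / 4) * X ^ k"
  proof -
    have "(E * x / 4) ^ (2*v-3) * p ^ (2*v-3) = (E * x * p / 4) * ((E * x * p / 4)^2) ^ k"
      unfolding m by (simp add: power_mult_distrib[symmetric] power_mult[symmetric] power_Suc mult_ac)
    also have "\<dots> \<le> (E * x / 4) * X ^ k"
    proof (rule mult_mono)
      show "E * x * p / 4 \<le> E * x / 4" using p E0 x3 by (simp add: mult_left_le)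
      have "(E * x * p / 4)^2 = (E * x / 4)^2 * p^2" unfolding power2_eq_square by (simp add: field_simps)
      also have "\<dots> \<le> (E * x / 4)^2 * (16 / (E^5 * nn * ll))" by (rule mult_left_mono[OF pl]) simp
      also have "\<dots> = X" unfolding X_def using E0 by (simp add: field_simps power2_eq_square power_numeral_reduce)
      finally have "(E * x * p / 4)^2 \<le> X" .
      then show "((E * x * p / 4)^2) ^ k \<le> X ^ k" by (rule power_mono) (rule zero_le_power2)
      show "0 \<le> E * x / 4" using E0 x3 by simp
      show "0 \<le> ((E * x * p / 4)^2) ^ k" by simp
    qed
    finally show ?thesis .
  qed
  have s23: "real ((v choose 2) choose (2*v-3)) * p^(2*v-3) \<le> E * (E * x / 4) * X ^ k"
  proof -
    have "real ((v choose 2) choose (2*v-3)) * p^(2*v-3) \<le> (E * x / 4) ^ (2*v-3) * E * p^(2*v-3)"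
      using s2 p by (intro mult_right_mono) auto
    also have "\<dots> = E * ((E * x / 4) ^ (2*v-3) * p^(2*v-3))" by simp
    also have "\<dots> \<le> E * ((E * x / 4) * X ^ k)" using s3 E0 by (intro mult_left_mono) auto
    finally show ?thesis by simp
  qed
  have "real (n choose v) * (real ((v choose 2) choose (2*v-3)) * p^(2*v-3)) \<le> A ^ v * (E * (E * x / 4) * X ^ k)"
    by (rule mult_mono[OF s1 s23]) (use A0 p in simp_all)
  also have "A ^ v * (E * (E * x / 4) * X ^ k) = E * (E * x / 4) * A^2 * (A * X) ^ k"
    unfolding k by (simp add: power_add power_mult_distrib mult_ac power2_eq_square)
  also have "A * X = Y" unfolding A_def X_def Y_def using E0 nn0 x3 l0 by (simp add: field_simps power2_eq_square power_numeral_reduce)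
  also have "E * (E * x / 4) * A^2 * Y ^ k = (E^8 * nn^2 * ll^2 / (4 * x^3)) * (Y^k * Y^2)"
    unfolding A_def Y_def using E0 nn0 x3 l0 by (simp add: field_simps power2_eq_square power_numeral_reduce)
  also have "Y^k * Y^2 = Y^v" unfolding k by (simp add: power_add power2_eq_square)
  also have "(E^8 * nn^2 * ll^2 / (4 * x^3)) * Y^v \<le> (E^8 * nn^2 * ll^2) * Y^v"
  proof (rule mult_right_mono)
    have "1 \<le> x^3" using x3 by (intro one_le_power) simp
    then have h: "1 \<le> 4 * x^3" by simp
    have "E^8 * nn^2 * ll^2 * 1 \<le> E^8 * nn^2 * ll^2 * (4 * x^3)" by (rule mult_left_mono[OF h]) simp
    then show "E^8 * nn^2 * ll^2 / (4 * x^3) \<le> E^8 * nn^2 * ll^2"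
      using h x3 by (simp add: divide_le_eq)
    show "0 \<le> Y^v" using A0 by simp
  qed
  finally have fin: "real (n choose v) * (real ((v choose 2) choose (2*v-3)) * p^(2*v-3)) \<le> E^8 * nn^2 * ll^2 * Y^v" .
  have e8: "E^8 = exp 8" unfolding E_def using exp_nat_pow[of 8] by simp
  have e2: "E^2 = exp 2" unfolding E_def using exp_nat_pow[of 2] by simp
  show ?thesis using fin unfolding Y_def e8 e2 nn_def ll_def x_def .
qed

lemma e27: "27/10 \<le> exp (1::real)"
proof -
  have "(\<lambda>n. 1 ^ n /\<^sub>R fact n) sums exp (1::real)" by (rule exp_converges)
  then have s: "summable (\<lambda>n. 1 / fact n :: real)" "(\<Sum>n. 1 / fact n :: real) = exp 1"
    by (auto simp: sums_iff divide_inverse)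
  have "(\<Sum>n<6. 1 / fact n :: real) \<le> (\<Sum>n. 1 / fact n)"
    by (rule sum_le_suminf[OF s(1)]) auto
  moreover have "(\<Sum>n<6. 1 / fact n :: real) = 163/60"
    by (simp add: lessThan_nat_numeral fact_numeral)
  ultimately show ?thesis using s(2) by simp
qed

lemma quad_interval:
  fixes A B x b c :: real
  assumes "A \<le> x" "x \<le> B" "A < B" "A^2 + b*A + c \<le> 0" "B^2 + b*B + c \<le> 0"
  shows "x^2 + b*x + c \<le> 0"
proof -
  have id: "(B - A) * (x^2 + b*x + c) = (B - A) * ((x - A) * (x - B)) + (B - x) * (A^2 + b*A + c) + (x - A) * (B^2 + b*B + c)"
    by algebra
  have "(B - A) * ((x - A) * (x - B)) \<le> 0" using assms by (intro mult_nonneg_nonpos mult_nonneg_nonpos) auto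
  moreover have "(B - x) * (A^2 + b*A + c) \<le> 0" using assms by (intro mult_nonneg_nonpos) auto
  moreover have "(x - A) * (B^2 + b*B + c) \<le> 0" using assms by (intro mult_nonneg_nonpos) auto
  ultimately have "(B - A) * (x^2 + b*x + c) \<le> 0" unfolding id by linarith
  then show ?thesis using assms(3) by (simp add: mult_le_0_iff)
qed

lemma Y_bound:
  fixes ll :: real and v :: nat
  assumes ll: "200 \<le> ll" and va: "27/20 * ll \<le> real v" "real v \<le> 3 * (27/20) * ll + 2"
  shows "(real v / (exp 2 * ll)) ^ v \<le> exp (-(201/100) * ll)"
proof -
  define E where "E = exp (1::real)"
  define x where "x = real v"
  have E: "27/10 \<le> E" using e27 E_def by simp
  have E0: "0 < E" using E by simp
  have l0: "0 < ll" using ll by simp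
  have x0: "0 < x" using va l0 x_def by linarith
  have e2: "exp 2 = E * E" using exp_nat_pow[of 2] unfolding E_def by (simp add: power2_eq_square)
  have Q: "x^2 + (-2 * E * ll) * x + (201/100 * E * ll^2) \<le> 0"
  proof (rule quad_interval[of "27/20 * ll" x "3 * (27/20) * ll + 2"])
    show "27/20 * ll \<le> x" "x \<le> 3 * (27/20) * ll + 2" using va x_def by auto
    show "27/20 * ll < 3 * (27/20) * ll + 2" using l0 by simp
    have "(27/20 * ll)^2 + (-2 * E * ll) * (27/20 * ll) + 201/100 * E * ll^2 = ll^2 * (729/400 - E * 69/100)"
      by (simp add: algebra_simps power2_eq_square)
    also have "\<dots> \<le> 0" using E by (intro mult_nonneg_nonpos) auto
    finally show "(27/20 * ll)^2 + (-2 * E * ll) * (27/20 * ll) + 201/100 * E * ll^2 \<le> 0" .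
    have "(3 * (27/20) * ll + 2)^2 + (-2 * E * ll) * (3 * (27/20) * ll + 2) + 201/100 * E * ll^2
        = (6561/400 * ll^2 + 81/5 * ll + 4) - E * (609/100 * ll^2 + 4 * ll)"
      by (simp add: algebra_simps power2_eq_square)
    also have "\<dots> \<le> (6561/400 * ll^2 + 81/5 * ll + 4) - 27/10 * (609/100 * ll^2 + 4 * ll)"
      using E l0 by (intro diff_left_mono mult_right_mono) auto
    also have "\<dots> = ll * (27/5 - 81/2000 * ll) + 4" by (simp add: algebra_simps power2_eq_square)
    also have "\<dots> \<le> ll * (-27/10) + 4" using ll l0 by (intro add_right_mono mult_left_mono) auto
    also have "\<dots> \<le> 0" using ll by simp
    finally show "(3 * (27/20) * ll + 2)^2 + (-2 * E * ll) * (3 * (27/20) * ll + 2) + 201/100 * E * ll^2 \<le> 0" .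
  qed
  have key: "x * (x / (E * ll) - 2) \<le> -(201/100) * ll"
  proof -
    have "x * (x / (E * ll) - 2) + 201/100 * ll = (x^2 + (-2 * E * ll) * x + (201/100 * E * ll^2)) / (E * ll)"
      using E0 l0 by (simp add: field_simps power2_eq_square)
    also have "\<dots> \<le> 0" using Q E0 l0 by (simp add: divide_nonpos_pos)
    finally show ?thesis by simp
  qed
  define Y where "Y = x / (exp 2 * ll)"
  have Y0: "0 < Y" unfolding Y_def using x0 l0 by simp
  have lnY: "ln Y \<le> x / (E * ll) - 2"
  proof -
    have Yq: "Y = (x / (E * ll)) / E" unfolding Y_def e2 by (simp add: field_simps)
    have "ln Y = ln (x / (E * ll)) - ln E" unfolding Yq by (rule ln_divide_pos) (use x0 E0 l0 in simp_all)
    also have "ln E = 1" unfolding E_def by simp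
    also have "ln (x / (E * ll)) \<le> x / (E * ll) - 1" using x0 E0 l0 by (intro ln_le_minus_one) simp
    finally show ?thesis by simp
  qed
  have "Y ^ v = exp (real v * ln Y)" using Y0 by (simp add: exp_of_nat_mult)
  also have "\<dots> \<le> exp (x * (x / (E * ll) - 2))"
    using lnY x0 x_def by (simp add: mult_left_mono)
  also have "\<dots> \<le> exp (-(201/100) * ll)" using key by simp
  finally show ?thesis unfolding Y_def x_def .
qed



lemma gnp_nonneg: "0 \<le> p \<Longrightarrow> p \<le> 1 \<Longrightarrow> 0 \<le> gnp_prob n p P"
  unfolding gnp_prob_def by (intro sum_nonneg) simp

lemma main_bound:
  fixes n :: nat and p :: real
  assumes p: "0 \<le> p" "p \<le> 1" and pn: "p^2 * real n * ln (real n) \<le> 16 / exp 5"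
    and l: "200 \<le> ln (real n)" and ln: "27/20 * ln (real n) + 1 \<le> real n"
  shows "gnp_prob n p (\<lambda>G. K4_closure n G = Kn_edges n)
     \<le> 2 * (27/20 * ln (real n) + 1) * exp 8 * (ln (real n))^2 * exp (-(1/100) * ln (real n))"
proof -
  define ll where "ll = ln (real n)"
  define L where "L = nat \<lceil>27/20 * ll\<rceil>"
  have l0: "0 < ll" using l ll_def by simp
  have L1: "27/20 * ll \<le> real L" unfolding L_def by linarith
  have L2: "real L \<le> 27/20 * ll + 1" unfolding L_def using l0 by linarith
  have L3: "3 \<le> L" using L1 l ll_def by linarith
  have L4: "L \<le> n" using L2 ln ll_def by linarith
  have n0: "0 < real n" using ln l ll_def by linarith
  define c where "c = exp 8 * real n ^ 2 * ll ^ 2 * exp (-(201/100) * ll)"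
  have "gnp_prob n p (\<lambda>G. K4_closure n G = Kn_edges n) \<le>
    (\<Sum>v\<in>{L..<3*L}. real (n choose v) * (real ((v choose 2) choose (2*v-3)) * p ^ (2*v-3)))"
    by (rule perc_bound[OF p L3 L4])
  also have "\<dots> \<le> (\<Sum>v\<in>{L..<3*L}. c)"
  proof (rule sum_mono)
    fix v assume v: "v \<in> {L..<3*L}"
    have "real (n choose v) * (real ((v choose 2) choose (2*v-3)) * p ^ (2*v-3))
        \<le> exp 8 * real n ^ 2 * ln (real n) ^ 2 * (real v / (exp 2 * ln (real n))) ^ v"
      using term_bound[of v n p] v L3 l0 p pn ll_def by simp
    also have "\<dots> \<le> exp 8 * real n ^ 2 * ln (real n) ^ 2 * exp (-(201/100) * ln (real n))"
    proof (rule mult_left_mono)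
      have "27/20 * ll \<le> real v" using v L1 by simp
      moreover have "real v \<le> 3 * (27/20) * ll + 2" using v L2 by simp
      ultimately show "(real v / (exp 2 * ln (real n))) ^ v \<le> exp (-(201/100) * ln (real n))"
        using Y_bound[of ll v] l ll_def by simp
    qed simp
    finally show "real (n choose v) * (real ((v choose 2) choose (2*v-3)) * p ^ (2*v-3)) \<le> c"
      unfolding c_def ll_def .
  qed
  also have "\<dots> = real (2 * L) * c" by simp
  also have "\<dots> \<le> 2 * (27/20 * ll + 1) * c"
    using L2 by (intro mult_right_mono) (auto simp: c_def)
  also have "c = exp 8 * ll^2 * exp (-(1/100) * ll)"
  proof -
    have "real n = exp ll" using n0 ll_def by simp
    then have "real n ^ 2 = exp (2 * ll)" by (simp add: power2_eq_square flip: exp_add)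
    then have "real n ^ 2 * exp (-(201/100) * ll) = exp (-(1/100) * ll)" by (simp flip: exp_add)
    then show ?thesis unfolding c_def by (simp add: mult_ac)
  qed
  finally show ?thesis unfolding ll_def by (simp add: mult_ac)
qed

theorem proposition4p5:
  fixes p :: "nat \<Rightarrow> real"
  assumes "\<And>n. 0 \<le> p n \<and> p n \<le> 1"
    and "\<And>n. (p n)^2 * real n * ln (real n) \<le> 16 / exp 5"
  shows "(\<lambda>n. gnp_prob n (p n) (\<lambda>G. K4_closure n G = Kn_edges n)) \<longlonglongrightarrow> 0"
proof (rule tendsto_sandwich[of "\<lambda>_. 0" _ _
      "\<lambda>n. 2 * (27/20 * ln (real n) + 1) * exp 8 * (ln (real n))^2 * exp (-(1/100) * ln (real n))"])
  show "\<forall>\<^sub>F n in sequentially. 0 \<le> gnp_prob n (p n) (\<lambda>G. K4_closure n G = Kn_edges n)"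
    using assms(1) gnp_nonneg by (intro always_eventually) blast
  have ev1: "eventually (\<lambda>n::nat. 200 \<le> ln (real n)) sequentially" by real_asymp
  have ev2: "eventually (\<lambda>n::nat. 27/20 * ln (real n) + 1 \<le> real n) sequentially" by real_asymp
  show "\<forall>\<^sub>F n in sequentially. gnp_prob n (p n) (\<lambda>G. K4_closure n G = Kn_edges n)
      \<le> 2 * (27/20 * ln (real n) + 1) * exp 8 * (ln (real n))^2 * exp (-(1/100) * ln (real n))"
    using ev1 ev2
  proof eventually_elim
    case (elim n)
    then show ?case using main_bound[of "p n" n] assms by blast
  qed
  show "(\<lambda>_. 0) \<longlonglongrightarrow> (0::real)" by simp
  show "(\<lambda>n. 2 * (27/20 * ln (real n) + 1) * exp 8 * (ln (real n))^2 * exp (-(1/100) * ln (real n))) \<longlonglongrightarrow> 0"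
    by real_asymp
qed

end
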